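(* Let $1\le d<n$, $r=d(n-d)$, $\mathfrak C$ a maximal chain in $I(d,n)$, $\sigma=\sigma_{\mathfrak C}$, and let $1\le t\le r-1$ be such that $\sigma s_t<_R\sigma$. Then $E_t(\mathfrak C)\neq0$.
   Context: $I(d,n)$: $d$-subsets of $\{1,\dots,n\}$ as increasing sequences, ordered by $\underline i\le\underline j$ iff $i_k\le j_k$ for all $k$. Maximal chains $\underline i_r>\cdots>\underline i_0$; compared lexicographically via concatenated strings; $\mathfrak C_{\mathrm{right}}$ the smallest. Root operators $f_{s,h}$ ($1\le h\le d$, $h\le s<n-d+h$): $f_{s,h}(i_1\cdots i_d)$ replaces $i_h=s$ by $s+1$ if $i_h=s$ and ($h=d$ or $i_{h+1}\ge s+2$), else $0$. Along a maximal chain $\underline i_t=f_{s_t,h_t}(\underline i_{t-1})$, each admissible pair occurring exactly once; $\tilde f_t:=f_{s_t,h_t}$ for $\mathfrak C_{\mathrm{right}}$; $\sigma_{\mathfrak C}\in\mathsf S_r$ is defined by: the operator from $\underline i_{t-1}$ to $\underline i_t$ in $\mathfrak C$ is $\tilde f_{\sigma_{\mathfrak C}(t)}$. If the Bruhat interval $[\underline i_{t-1},\underline i_{t+1}]$ has 4 elements $\{\underline i_{t-1},\underline i_t,\underline i'_t,\underline i_{t+1}\}$ and $\underline i_t>_{lex}\underline i'_t$ (left peak), $E_t(\mathfrak C)$ is the chain with $\underline i_t$ replaced by $\underline i'_t$; otherwise $E_t(\mathfrak C)=0$. $s_t=(t,t+1)$, and $\le_R$ is the right weak Bruhat order on $\mathsf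 S_r$. *)

theory Defs
  imports "HOL-Combinatorics.Combinatorics"
begin

text \<open>Elements of I(d,n): d-subsets of {1..n}, as strictly increasing lists of length d.\<close>
definition Iset :: "nat \<Rightarrow> nat \<Rightarrow> nat list set" where
  "Iset d n = {i. length i = d \<and> sorted_wrt (<) i \<and> set i \<subseteq> {1..n}}"

definition bru_le :: "nat list \<Rightarrow> nat list \<Rightarrow> bool" where
  "bru_le i j \<longleftrightarrow> length i = length j \<and> (\<forall>k<length i. i ! k \<le> j ! k)"

definition bru_less :: "nat list \<Rightarrow> nat list \<Rightarrow> bool" where
  "bru_less i j \<longleftrightarrow> bru_le i j \<and> i \<noteq> j"

definition lex_less :: "nat list \<Rightarrow> nat list \<Rightarrow> bool" where
  "lex_less x y \<longleftrightarrow> (x, y) \<in> lexord {(a, b). a < b}"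

text \<open>A maximal chain i_r > ... > i_0 is represented by the list [i_0, i_1, ..., i_r]
  (so C ! t = i_t): its set of elements is a chain in I(d,n) which is maximal
  with respect to inclusion.\<close>
definition max_chain :: "nat \<Rightarrow> nat \<Rightarrow> nat list list \<Rightarrow> bool" where
  "max_chain d n C \<longleftrightarrow> C \<noteq> [] \<and> set C \<subseteq> Iset d n \<and> sorted_wrt bru_less C \<and>
     (\<forall>x\<in>Iset d n. x \<notin> set C \<longrightarrow> \<not> (\<forall>y\<in>set C. bru_le x y \<or> bru_le y x))"

definition chain_lex_less :: "nat list list \<Rightarrow> nat list list \<Rightarrow> bool" where
  "chain_lex_less C C' \<longleftrightarrow> lex_less (concat (rev C)) (concat (rev C'))"

definition C_right :: "nat \<Rightarrow> nat \<Rightarrow> nat list list" where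
  "C_right d n = (THE C. max_chain d n C \<and>
     (\<forall>C'. max_chain d n C' \<longrightarrow> C' = C \<or> chain_lex_less C C'))"

text \<open>Root operator f_{s,h} (h is 1-based); None plays the role of 0.\<close>
definition root_op :: "nat \<Rightarrow> nat \<Rightarrow> nat \<Rightarrow> nat list \<Rightarrow> nat list option" where
  "root_op d s h i = (if i ! (h - 1) = s \<and> (h = d \<or> i ! h \<ge> s + 2)
      then Some (i[h - 1 := s + 1]) else None)"

definition admissible :: "nat \<Rightarrow> nat \<Rightarrow> nat \<Rightarrow> nat \<Rightarrow> bool" where
  "admissible d n s h \<longleftrightarrow> 1 \<le> h \<and> h \<le> d \<and> h \<le> s \<and> s < n - d + h"

definition step_op :: "nat \<Rightarrow> nat \<Rightarrow> nat list list \<Rightarrow> nat \<Rightarrow> nat \<times> nat" where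
  "step_op d n C t = (THE p. admissible d n (fst p) (snd p) \<and>
      root_op d (fst p) (snd p) (C ! (t - 1)) = Some (C ! t))"

definition sigma :: "nat \<Rightarrow> nat \<Rightarrow> nat list list \<Rightarrow> nat \<Rightarrow> nat" where
  "sigma d n C t = (if t \<in> {1..d * (n - d)}
      then (THE u. u \<in> {1..d * (n - d)} \<and> step_op d n (C_right d n) u = step_op d n C t)
      else t)"

definition inv_len :: "nat \<Rightarrow> (nat \<Rightarrow> nat) \<Rightarrow> nat" where
  "inv_len r p = card {(i, j). i \<in> {1..r} \<and> j \<in> {1..r} \<and> i < j \<and> p j < p i}"

definition weak_le_R :: "nat \<Rightarrow> (nat \<Rightarrow> nat) \<Rightarrow> (nat \<Rightarrow> nat) \<Rightarrow> bool" where
  "weak_le_R r u w \<longleftrightarrow> u permutes {1..r} \<and> w permutes {1..r} \<and>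
     inv_len r u + inv_len r (inv u \<circ> w) = inv_len r w"

definition weak_less_R :: "nat \<Rightarrow> (nat \<Rightarrow> nat) \<Rightarrow> (nat \<Rightarrow> nat) \<Rightarrow> bool" where
  "weak_less_R r u w \<longleftrightarrow> weak_le_R r u w \<and> u \<noteq> w"

definition bru_interval :: "nat \<Rightarrow> nat \<Rightarrow> nat list \<Rightarrow> nat list \<Rightarrow> nat list set" where
  "bru_interval d n a b = {x \<in> Iset d n. bru_le a x \<and> bru_le x b}"

text \<open>E_t(C); None plays the role of 0.\<close>
definition E_op :: "nat \<Rightarrow> nat \<Rightarrow> nat list list \<Rightarrow> nat \<Rightarrow> nat list list option" where
  "E_op d n C t = (let a = C ! (t - 1); m = C ! t; b = C ! (t + 1);
       J = bru_interval d n a b in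
     if card J = 4 \<and> a \<in> J \<and> m \<in> J \<and> b \<in> J \<and>
        (\<exists>x. J - {a, m, b} = {x} \<and> lex_less x m)
     then Some (C[t := (THE x. J - {a, m, b} = {x})]) else None)"

end

theory Submission
  imports Defs
begin


definition incr :: "nat list \<Rightarrow> nat \<Rightarrow> nat list" where
  "incr x h = x[h := Suc (x ! h)]"

definition botl :: "nat \<Rightarrow> nat list" where
  "botl d = map Suc [0..<d]"

definition topl :: "nat \<Rightarrow> nat \<Rightarrow> nat list" where
  "topl d n = map (\<lambda>i. Suc i + (n - d)) [0..<d]"

lemma Iset_iff:
  "x \<in> Iset d n \<longleftrightarrow> length x = d \<and> (\<forall>i j. i < j \<longrightarrow> j < d \<longrightarrow> x ! i < x ! j) \<and>
     (\<forall>i<d. 1 \<le> x ! i \<and> x ! i \<le> n)"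
  unfolding Iset_def
  by (auto simp: sorted_wrt_iff_nth_less in_set_conv_nth subset_iff)

lemma sorted_gap:
  assumes "\<forall>i j. i < j \<longrightarrow> j < d \<longrightarrow> x ! i < (x ! j :: nat)" "i \<le> j" "j < d"
  shows "x ! i + (j - i) \<le> x ! j"
  using assms(2,3)
proof (induction j)
  case 0 then show ?case by simp
next
  case (Suc j)
  show ?case
  proof (cases "i = Suc j")
    case True then show ?thesis by simp
  next
    case False
    then have "i \<le> j" using Suc by simp
    then have "x ! i + (j - i) \<le> x ! j" using Suc by simp
    moreover have "x ! j < x ! Suc j" using assms(1) Suc by simp
    ultimately show ?thesis using \<open>i \<le> j\<close> by simp
  qed
qed

lemma Iset_bounds:
  assumes "x \<in> Iset d n" "k < d"
  shows "Suc k \<le> x ! k" "x ! k + d \<le> n + k + 1"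
proof -
  have s: "\<forall>i j. i < j \<longrightarrow> j < d \<longrightarrow> x ! i < x ! j" and b: "\<forall>i<d. 1 \<le> x ! i \<and> x ! i \<le> n"
    using assms(1) by (auto simp: Iset_iff)
  have "x ! 0 + (k - 0) \<le> x ! k" using sorted_gap[OF s, of 0 k] assms by simp
  moreover have "1 \<le> x ! 0" using b assms by auto
  ultimately show "Suc k \<le> x ! k" by simp
  have "x ! k + (d - 1 - k) \<le> x ! (d - 1)" using sorted_gap[OF s, of k "d - 1"] assms by simp
  moreover have "x ! (d - 1) \<le> n" using b assms by auto
  ultimately show "x ! k + d \<le> n + k + 1" using assms by simp
qed

lemma bru_le_refl: "bru_le x x" by (simp add: bru_le_def)

lemma bru_le_trans: "bru_le x y \<Longrightarrow> bru_le y z \<Longrightarrow> bru_le x z"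
  unfolding bru_le_def by (metis le_trans)

lemma bru_le_antisym: "bru_le x y \<Longrightarrow> bru_le y x \<Longrightarrow> x = y"
  unfolding bru_le_def by (metis le_antisym nth_equalityI)

lemma length_incr[simp]: "length (incr x h) = length x"
  by (simp add: incr_def)

lemma incr_nth: "h < length x \<Longrightarrow> incr x h ! i = (if i = h then Suc (x ! h) else x ! i)"
  by (simp add: incr_def nth_list_update)

lemma sum_incr: "h < length x \<Longrightarrow> sum_list (incr x h) = Suc (sum_list x)"
  unfolding incr_def using sum_list_update[of h x "Suc (x ! h)"] elem_le_sum_list[of h x] by simp

lemma incr_inj: "incr a h = incr b h \<Longrightarrow> h < length a \<Longrightarrow> length a = length b \<Longrightarrow> a = b"
  by (rule nth_equalityI) (auto simp: incr_nth dest: arg_cong[where f="\<lambda>l. l ! _"] split: if_splits)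

lemma botl_Iset: "d \<le> n \<Longrightarrow> botl d \<in> Iset d n"
  by (auto simp: Iset_iff botl_def)

lemma topl_Iset: "d \<le> n \<Longrightarrow> topl d n \<in> Iset d n"
  by (auto simp: Iset_iff topl_def)

lemma botl_le: "x \<in> Iset d n \<Longrightarrow> bru_le (botl d) x"
  using Iset_bounds(1) by (auto simp: bru_le_def botl_def Iset_iff)

lemma le_topl: "x \<in> Iset d n \<Longrightarrow> bru_le x (topl d n)"
  using Iset_bounds(2)[of x d n] by (fastforce simp: bru_le_def topl_def Iset_iff)

lemma sum_shift: "sum_list (map (\<lambda>i. Suc i + c) [0..<d]) = sum_list (map Suc [0..<d]) + d * (c::nat)"
  by (induction d) auto

lemma sum_topl: "sum_list (topl d n) = sum_list (botl d) + d * (n - d)"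
  unfolding topl_def botl_def by (rule sum_shift)

lemma sandwich:
  assumes "bru_le a x" "bru_le x (incr a h)" "h < length a"
  shows "x = a \<or> x = incr a h"
proof -
  have l: "length x = length a" using assms by (simp add: bru_le_def)
  have o: "\<forall>i<length a. i \<noteq> h \<longrightarrow> x ! i = a ! i"
    using assms by (fastforce simp: bru_le_def incr_nth)
  have "x ! h = a ! h \<or> x ! h = Suc (a ! h)"
    using assms l by (fastforce simp: bru_le_def incr_nth)
  then show ?thesis
  proof
    assume "x ! h = a ! h" then have "x = a" using o l by (metis nth_equalityI)
    then show ?thesis ..
  next
    assume "x ! h = Suc (a ! h)" then have "x = incr a h" using o l assms(3)
      by (intro nth_equalityI) (auto simp: incr_nth)
    then show ?thesis ..
  qed
qed

lemma cover:
  assumes "x \<in> Iset d n" "y \<in> Iset d n" "bru_less x y"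
  shows "\<exists>h<d. incr x h \<in> Iset d n \<and> bru_le (incr x h) y"
proof -
  have lx: "length x = d" and ly: "length y = d" using assms by (auto simp: Iset_iff)
  have le: "\<forall>k<d. x ! k \<le> y ! k" using assms(3) lx by (simp add: bru_less_def bru_le_def)
  define K where "K = {i. i < d \<and> x ! i < y ! i}"
  have "K \<noteq> {}"
  proof
    assume "K = {}"
    then have "\<forall>k<d. x ! k = y ! k" using le by (force simp: K_def)
    then have "x = y" using lx ly by (metis nth_equalityI)
    then show False using assms(3) by (simp add: bru_less_def)
  qed
  have fK: "finite K" by (simp add: K_def)
  define h where "h = Max K"
  have hK: "h \<in> K" using Max_in[OF fK \<open>K \<noteq> {}\<close>] h_def by simp
  have hd: "h < d" and hlt: "x ! h < y ! h" using hK by (auto simp: K_def)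
  have above: "\<forall>j. h < j \<longrightarrow> j < d \<longrightarrow> x ! j = y ! j"
  proof (intro allI impI)
    fix j assume "h < j" "j < d"
    then have "j \<notin> K" using Max_ge[OF fK] h_def by force
    then show "x ! j = y ! j" using le \<open>j < d\<close> by (force simp: K_def)
  qed
  have sx: "\<forall>i j. i < j \<longrightarrow> j < d \<longrightarrow> x ! i < x ! j" and bx: "\<forall>i<d. 1 \<le> x ! i \<and> x ! i \<le> n"
    using assms(1) by (auto simp: Iset_iff)
  have sy: "\<forall>i j. i < j \<longrightarrow> j < d \<longrightarrow> y ! i < y ! j" and ny: "\<forall>i<d. 1 \<le> y ! i \<and> y ! i \<le> n"
    using assms(2) by (auto simp: Iset_iff)
  have "incr x h \<in> Iset d n"
    unfolding Iset_iff
  proof (intro conjI allI impI)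
    show "length (incr x h) = d" using lx by simp
  next
    fix i j assume ij: "i < j" "j < d"
    show "incr x h ! i < incr x h ! j"
    proof (cases "j = h")
      case True then show ?thesis using ij sx lx hd by (simp add: incr_nth less_SucI)
    next
      case False
      show ?thesis
      proof (cases "i = h")
        case True
        then have "x ! j = y ! j" using above ij by simp
        then show ?thesis using True False ij sy hlt lx hd by (simp add: incr_nth) (metis Suc_leI le_less_trans le order.strict_trans2)
      next
        case False
        then show ?thesis using \<open>j \<noteq> h\<close> ij sx lx hd by (simp add: incr_nth)
      qed
    qed
  next
    fix i assume "i < d"
    then show "1 \<le> incr x h ! i"
      using bx ny hlt hd lx by (auto simp: incr_nth)
  next
    fix i assume "i < d"
    then show "incr x h ! i \<le> n"
      using bx ny hlt hd lx by (auto simp: incr_nth)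
  qed
  moreover have "bru_le (incr x h) y"
    using le hlt lx ly hd by (auto simp: bru_le_def incr_nth Suc_le_eq)
  ultimately show ?thesis using hd by blast
qed



locale mc =
  fixes d n :: nat and C :: "nat list list"
  assumes dn: "d \<le> n" and mch: "max_chain d n C"
begin

lemma ne: "C \<noteq> []" and inI: "k < length C \<Longrightarrow> C ! k \<in> Iset d n"
  and srt: "sorted_wrt bru_less C"
  and maxl: "\<And>x. x \<in> Iset d n \<Longrightarrow> x \<notin> set C \<Longrightarrow> \<exists>y\<in>set C. \<not> bru_le x y \<and> \<not> bru_le y x"
  using mch by (auto simp: max_chain_def)

lemma less: "i < j \<Longrightarrow> j < length C \<Longrightarrow> bru_less (C ! i) (C ! j)"
  using srt by (simp add: sorted_wrt_iff_nth_less)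

lemma leq: "i \<le> j \<Longrightarrow> j < length C \<Longrightarrow> bru_le (C ! i) (C ! j)"
  using less[of i j] by (cases "i = j") (auto simp: bru_le_refl bru_less_def)

lemma first: "C ! 0 = botl d"
proof -
  have "botl d \<in> set C"
  proof (rule ccontr)
    assume "botl d \<notin> set C"
    then obtain y where "y \<in> set C" "\<not> bru_le (botl d) y" using maxl botl_Iset[OF dn] by blast
    then show False using botl_le inI by (metis in_set_conv_nth)
  qed
  then obtain j where j: "j < length C" "C ! j = botl d" by (metis in_set_conv_nth)
  show ?thesis
  proof (cases j)
    case 0 then show ?thesis using j by simp
  next
    case (Suc j')
    then have "bru_less (C ! 0) (C ! j)" using less[of 0 j] j by simp
    moreover have "bru_le (C ! j) (C ! 0)" using j botl_le[OF inI[of 0]] ne by simp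
    ultimately show ?thesis by (auto simp: bru_less_def dest: bru_le_antisym)
  qed
qed

lemma last: "C ! (length C - 1) = topl d n"
proof -
  have "topl d n \<in> set C"
  proof (rule ccontr)
    assume "topl d n \<notin> set C"
    then obtain y where "y \<in> set C" "\<not> bru_le y (topl d n)" using maxl topl_Iset[OF dn] by blast
    then show False using le_topl inI by (metis in_set_conv_nth)
  qed
  then obtain j where j: "j < length C" "C ! j = topl d n" by (metis in_set_conv_nth)
  show ?thesis
  proof (cases "j = length C - 1")
    case True then show ?thesis using j by simp
  next
    case False
    then have "bru_less (C ! j) (C ! (length C - 1))" using less[of j "length C - 1"] j by simp
    moreover have "bru_le (C ! (length C - 1)) (C ! j)" using j le_topl inI ne by simp
    ultimately show ?thesis by (auto simp: bru_less_def dest: bru_le_antisym)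
  qed
qed

lemma step: assumes "Suc k < length C" shows "\<exists>h<d. C ! Suc k = incr (C ! k) h"
proof -
  let ?x = "C ! k" and ?y = "C ! Suc k"
  have xy: "bru_less ?x ?y" using less assms by simp
  obtain h where h: "h < d" "incr ?x h \<in> Iset d n" "bru_le (incr ?x h) ?y"
    using cover[OF inI inI xy] assms by auto
  have lx: "length ?x = d" using inI assms by (simp add: Iset_iff)
  have xz: "bru_le ?x (incr ?x h)" using h lx by (auto simp: bru_le_def incr_nth)
  have xnz: "?x \<noteq> incr ?x h" using h lx by (metis incr_nth lessI less_irrefl nth_list_update_eq incr_def)
  show ?thesis
  proof (cases "incr ?x h = ?y")
    case True then show ?thesis using h by auto
  next
    case False
    have "incr ?x h \<notin> set C"
    proof
      assume "incr ?x h \<in> set C"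
      then obtain j where j: "j < length C" "C ! j = incr ?x h" by (metis in_set_conv_nth)
      show False
      proof (cases "j \<le> k")
        case True
        then have "bru_le (incr ?x h) ?x" using leq[of j k] j assms by simp
        then show False using xz xnz bru_le_antisym by metis
      next
        case False
        then have "bru_le ?y (incr ?x h)" using leq[of "Suc k" j] j assms by simp
        then show False using h(3) \<open>incr ?x h \<noteq> ?y\<close> bru_le_antisym by metis
      qed
    qed
    then obtain w where w: "w \<in> set C" "\<not> bru_le (incr ?x h) w" "\<not> bru_le w (incr ?x h)"
      using maxl h(2) by blast
    then obtain j where j: "j < length C" "C ! j = w" by (metis in_set_conv_nth)
    show ?thesis
    proof (cases "j \<le> k")
      case True
      then have "bru_le w ?x" using leq[of j k] j assms by simp
      then show ?thesis using w xz bru_le_trans by blast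
    next
      case False
      then have "bru_le ?y w" using leq[of "Suc k" j] j assms by simp
      then show ?thesis using w h(3) bru_le_trans by blast
    qed
  qed
qed

lemma weight: "k < length C \<Longrightarrow> sum_list (C ! k) = sum_list (botl d) + k"
proof (induction k)
  case 0 then show ?case using first by simp
next
  case (Suc k)
  then obtain h where "h < d" "C ! Suc k = incr (C ! k) h" using step by blast
  moreover have "length (C ! k) = d" using inI Suc by (simp add: Iset_iff)
  ultimately show ?case using Suc sum_incr by simp
qed

lemma len: "length C = Suc (d * (n - d))"
proof -
  have "sum_list (C ! (length C - 1)) = sum_list (botl d) + (length C - 1)"
    using weight ne by simp
  then show ?thesis using last sum_topl ne by simp
qed

end



lemma root_op_incr:
  assumes "x \<in> Iset d n" "incr x h \<in> Iset d n" "h < d" "d \<le> n"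
  shows "admissible d n (x ! h) (Suc h) \<and> root_op d (x ! h) (Suc h) x = Some (incr x h)"
proof -
  have lx: "length x = d" using assms by (simp add: Iset_iff)
  have b1: "Suc h \<le> x ! h" using Iset_bounds(1)[OF assms(1,3)] .
  have b2: "incr x h ! h + d \<le> n + h + 1" using Iset_bounds(2)[OF assms(2,3)] .
  then have b2': "x ! h < n - d + Suc h" using lx assms(3) by (simp add: incr_nth)
  have "Suc h = d \<or> x ! Suc h \<ge> x ! h + 2"
  proof (cases "Suc h = d")
    case False
    then have "Suc h < d" using assms by simp
    then have "incr x h ! h < incr x h ! Suc h" using assms(2) by (simp add: Iset_iff)
    then show ?thesis using lx assms(3) \<open>Suc h < d\<close> by (simp add: incr_nth)
  qed simp
  then show ?thesis using b1 b2' assms(3,4) by (simp add: admissible_def root_op_def incr_def)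
qed

lemma root_op_unique:
  assumes "admissible d n s h'" "root_op d s h' x = Some (incr x h)" "h < length x" "length x = d"
  shows "s = x ! h \<and> h' = Suc h"
proof -
  have a: "x ! (h' - 1) = s" and y: "x[h' - 1 := Suc s] = incr x h"
    using assms(2) by (auto simp: root_op_def split: if_splits)
  have h'd: "h' - 1 < d" "1 \<le> h'" using assms(1) by (auto simp: admissible_def)
  have "h' - 1 = h"
  proof (rule ccontr)
    assume ne: "h' - 1 \<noteq> h"
    have "x[h' - 1 := Suc s] ! (h' - 1) = Suc s" using h'd assms(4) by simp
    moreover have "incr x h ! (h' - 1) = s" using ne a assms(3) by (simp add: incr_nth)
    ultimately show False using y by simp
  qed
  then show ?thesis using a h'd by auto
qed

lemma the_step:
  assumes "L ! (k - 1) \<in> Iset d n" "L ! k = incr (L ! (k - 1)) h" "L ! k \<in> Iset d n" "h < d" "d \<le> n"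
  shows "step_op d n L k = (L ! (k - 1) ! h, Suc h)"
proof -
  have l: "length (L ! (k - 1)) = d" using assms by (simp add: Iset_iff)
  have ex: "admissible d n (L ! (k - 1) ! h) (Suc h) \<and>
        root_op d (L ! (k - 1) ! h) (Suc h) (L ! (k - 1)) = Some (L ! k)"
    using root_op_incr[OF assms(1) _ assms(4,5)] assms(2,3) by simp
  show ?thesis unfolding step_op_def
  proof (rule the_equality)
    show "admissible d n (fst (L ! (k - 1) ! h, Suc h)) (snd (L ! (k - 1) ! h, Suc h)) \<and>
      root_op d (fst (L ! (k - 1) ! h, Suc h)) (snd (L ! (k - 1) ! h, Suc h)) (L ! (k - 1)) = Some (L ! k)"
      using ex by simp
  next
    fix p assume "admissible d n (fst p) (snd p) \<and> root_op d (fst p) (snd p) (L ! (k - 1)) = Some (L ! k)"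
    then show "p = (L ! (k - 1) ! h, Suc h)"
      using root_op_unique[of d n "fst p" "snd p" "L ! (k - 1)" h] assms(2,4) l
      by (cases p) auto
  qed
qed

definition cr :: "nat \<Rightarrow> nat \<Rightarrow> nat \<Rightarrow> nat list" where
  "cr d n k = map (\<lambda>i. Suc i + min (n - d) (k - (d - Suc i) * (n - d))) [0..<d]"

lemma cr_nth: "i < d \<Longrightarrow> cr d n k ! i = Suc i + min (n - d) (k - (d - Suc i) * (n - d))"
  by (simp add: cr_def)

lemma length_cr[simp]: "length (cr d n k) = d"
  by (simp add: cr_def)

lemma cr_Iset: assumes "d \<le> n" shows "cr d n k \<in> Iset d n"
  unfolding Iset_iff
proof (intro conjI allI impI)
  fix i j assume ij: "i < j" "j < d"
  have "(d - Suc j) * (n - d) \<le> (d - Suc i) * (n - d)" using ij by (intro mult_le_mono1) simp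
  then have "k - (d - Suc i) * (n - d) \<le> k - (d - Suc j) * (n - d)" by (rule diff_le_mono2)
  then have "min (n - d) (k - (d - Suc i) * (n - d)) \<le> min (n - d) (k - (d - Suc j) * (n - d))"
    by (metis min.mono order_refl)
  then have "Suc i + min (n - d) (k - (d - Suc i) * (n - d)) < Suc j + min (n - d) (k - (d - Suc j) * (n - d))"
    using ij by (intro add_less_le_mono) auto
  moreover have "i < d" using ij by simp
  ultimately show "cr d n k ! i < cr d n k ! j" using ij by (simp only: cr_nth)
next
  fix i assume "i < d"
  then show "1 \<le> cr d n k ! i" "cr d n k ! i \<le> n" using assms by (auto simp: cr_nth)
qed simp

lemma cr_0: "cr d n 0 = botl d"
  by (simp add: cr_def botl_def)

lemma cr_top: "cr d n (d * (n - d)) = topl d n"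
proof -
  have "\<And>i. i < d \<Longrightarrow> min (n - d) (d * (n - d) - (d - Suc i) * (n - d)) = n - d"
  proof -
    fix i assume "i < d"
    then have "(d - Suc i) * (n - d) + (n - d) = (Suc (d - Suc i)) * (n - d)" by simp
    also have "\<dots> \<le> d * (n - d)" using \<open>i < d\<close> by (intro mult_le_mono1) simp
    finally show "min (n - d) (d * (n - d) - (d - Suc i) * (n - d)) = n - d" by simp
  qed
  then show ?thesis by (simp add: cr_def topl_def)
qed

lemma cr_nth_m: "m = n - d \<Longrightarrow> i < d \<Longrightarrow> cr d n k ! i = Suc i + min m (k - (d - Suc i) * m)"
  by (simp add: cr_nth)

lemma cr_step_aux:
  assumes "c < d" "q < n - d" "k = c * (n - d) + q" "i < d"
  shows "cr d n (Suc k) ! i = (if i = d - Suc c then Suc (cr d n k ! i) else cr d n k ! i)"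
    and "i < d - Suc c \<Longrightarrow> cr d n (Suc k) ! i = Suc i"
proof -
  obtain m where m: "m = n - d" by simp
  have q: "q < m" and k: "k = c * m + q" using assms m by auto
  have e1: "cr d n (Suc k) ! i = Suc i + min m (Suc k - (d - Suc i) * m)"
    using cr_nth_m[OF m assms(4)] .
  have e0: "cr d n k ! i = Suc i + min m (k - (d - Suc i) * m)"
    using cr_nth_m[OF m assms(4)] .
  define c' where "c' = d - Suc i"
  have A: "c' = c \<Longrightarrow> cr d n (Suc k) ! i = Suc (cr d n k ! i)"
    using e0 e1 q k unfolding c'_def[symmetric] by simp
  have B: "c' < c \<Longrightarrow> cr d n (Suc k) ! i = cr d n k ! i"
  proof -
    assume "c' < c"
    then have "Suc c' * m \<le> c * m" by (intro mult_le_mono1) simp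
    then have "c' * m + m \<le> k" using k by simp
    then show ?thesis using e0 e1 unfolding c'_def[symmetric] by simp
  qed
  have C: "c' > c \<Longrightarrow> cr d n (Suc k) ! i = Suc i \<and> cr d n k ! i = Suc i"
  proof -
    assume "c' > c"
    then have "Suc c * m \<le> c' * m" by (intro mult_le_mono1) simp
    then have "Suc k \<le> c' * m" using k q by simp
    then show ?thesis using e0 e1 unfolding c'_def[symmetric] by simp
  qed
  have iff: "i = d - Suc c \<longleftrightarrow> c' = c" using assms by (auto simp: c'_def)
  show "cr d n (Suc k) ! i = (if i = d - Suc c then Suc (cr d n k ! i) else cr d n k ! i)"
  proof (cases "c' = c")
    case True then show ?thesis using A iff by simp
  next
    case False
    then have "c' < c \<or> c' > c" by auto
    then show ?thesis using B C False iff by auto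
  qed
  show "i < d - Suc c \<Longrightarrow> cr d n (Suc k) ! i = Suc i"
    using C assms by (auto simp: c'_def)
qed

lemma cr_step:
  assumes "c < d" "q < n - d"
  shows "cr d n (Suc (c * (n - d) + q)) = incr (cr d n (c * (n - d) + q)) (d - Suc c)"
  using assms by (intro nth_equalityI) (auto simp: incr_nth cr_step_aux(1))

lemma cr_val:
  assumes "c < d" "q < n - d"
  shows "cr d n (c * (n - d) + q) ! (d - Suc c) = d - c + q"
proof -
  have "d - Suc (d - Suc c) = c" using assms by simp
  then show ?thesis using assms by (simp add: cr_nth)
qed

lemma cr_step_gen:
  assumes "k < d * (n - d)"
  shows "\<exists>p<d. cr d n (Suc k) = incr (cr d n k) p \<and> (\<forall>i<p. cr d n (Suc k) ! i = Suc i)"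
proof -
  let ?m = "n - d"
  have m: "?m > 0" using assms by (cases "?m = 0") auto
  define c where "c = k div ?m"
  define q where "q = k mod ?m"
  have k: "k = c * ?m + q" unfolding c_def q_def by (metis div_mult_mod_eq)
  have q: "q < ?m" using m by (simp add: q_def)
  have c: "c < d" using assms m by (simp add: c_def less_mult_imp_div_less)
  show ?thesis
    using cr_step[OF c q] cr_step_aux(2)[OF c q k] k c by (intro exI[of _ "d - Suc c"]) auto
qed

lemma cr_weight: "k \<le> d * (n - d) \<Longrightarrow> sum_list (cr d n k) = sum_list (botl d) + k"
proof (induction k)
  case 0 then show ?case by (simp add: cr_0)
next
  case (Suc k)
  have "k < d * (n - d)" using Suc.prems by simp
  then obtain p where "p < d" "cr d n (Suc k) = incr (cr d n k) p" using cr_step_gen by blast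
  then show ?case using Suc sum_incr[of p "cr d n k"] by simp
qed

lemma cr_mono: "k \<le> k' \<Longrightarrow> bru_le (cr d n k) (cr d n k')"
  by (auto simp: bru_le_def cr_nth intro: min.mono)



definition CR :: "nat \<Rightarrow> nat \<Rightarrow> nat list list" where
  "CR d n = map (cr d n) [0..<Suc (d * (n - d))]"

lemma CR_len[simp]: "length (CR d n) = Suc (d * (n - d))"
  by (simp add: CR_def)

lemma CR_nth: "k \<le> d * (n - d) \<Longrightarrow> CR d n ! k = cr d n k"
  by (simp add: CR_def nth_append less_Suc_eq_le del: upt_Suc)

lemma set_CR: "set (CR d n) = cr d n ` {0..d * (n - d)}"
  unfolding CR_def set_map set_upt atLeastLessThanSuc_atLeastAtMost by (rule refl)

lemma CR_max_chain:
  assumes "d \<le> n" shows "max_chain d n (CR d n)"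
  unfolding max_chain_def
proof (intro conjI ballI impI)
  show "CR d n \<noteq> []" by (simp add: CR_def)
  show "set (CR d n) \<subseteq> Iset d n" using cr_Iset[OF assms] by (auto simp: set_CR)
  show "sorted_wrt bru_less (CR d n)"
    unfolding sorted_wrt_iff_nth_less
  proof (intro allI impI)
    fix i j assume ij: "i < j" "j < length (CR d n)"
    then have "bru_le (cr d n i) (cr d n j)" by (intro cr_mono) simp
    moreover have "sum_list (cr d n i) \<noteq> sum_list (cr d n j)" using ij cr_weight[of i d n] cr_weight[of j d n] by simp
    ultimately show "bru_less (CR d n ! i) (CR d n ! j)" using ij by (auto simp: CR_nth bru_less_def)
  qed
next
  fix x assume x: "x \<in> Iset d n" and nx: "x \<notin> set (CR d n)"
  show "\<not> (\<forall>y\<in>set (CR d n). bru_le x y \<or> bru_le y x)"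
  proof
    assume comp: "\<forall>y\<in>set (CR d n). bru_le x y \<or> bru_le y x"
    define K where "K = {k. k \<le> d * (n - d) \<and> bru_le (cr d n k) x}"
    have fK: "finite K" by (simp add: K_def)
    have "0 \<in> K" using botl_le[OF x] by (simp add: K_def cr_0)
    then have neK: "K \<noteq> {}" by blast
    define k where "k = Max K"
    have kK: "k \<in> K" using Max_in[OF fK neK] k_def by simp
    show False
    proof (cases "k = d * (n - d)")
      case True
      then have "bru_le (topl d n) x" using kK by (simp add: K_def cr_top)
      then have "x = cr d n (d * (n - d))" using le_topl[OF x] bru_le_antisym cr_top by metis
      then show False using nx by (simp add: set_CR)
    next
      case False
      then have kr: "k < d * (n - d)" using kK by (simp add: K_def)
      then have "Suc k \<notin> K" using Max_ge[OF fK] k_def by force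
      then have "\<not> bru_le (cr d n (Suc k)) x" using kr by (simp add: K_def)
      moreover have "cr d n (Suc k) \<in> set (CR d n)" using kr by (simp add: set_CR)
      ultimately have "bru_le x (cr d n (Suc k))" using comp by blast
      moreover obtain p where p: "p < d" "cr d n (Suc k) = incr (cr d n k) p" using cr_step_gen[OF kr] by blast
      moreover have "bru_le (cr d n k) x" using kK by (simp add: K_def)
      ultimately have "x = cr d n k \<or> x = cr d n (Suc k)" using sandwich[of "cr d n k" x p] by simp
      then show False using nx kr by (auto simp: set_CR)
    qed
  qed
qed

lemma lex_app:
  assumes "(a, b) \<in> lexord R" "length a = length b"
  shows "(u @ a @ v, u @ b @ w) \<in> lexord R"
proof -
  obtain i where i: "i < length a" "take i a = take i b" "(a ! i, b ! i) \<in> R"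
    using assms by (auto simp: lexord_take_index_conv)
  have "a = take i a @ a ! i # drop (Suc i) a" using i by (metis id_take_nth_drop)
  moreover have "b = take i a @ b ! i # drop (Suc i) b" using i assms(2) by (metis id_take_nth_drop)
  ultimately have "u @ a @ v = (u @ take i a) @ a ! i # (drop (Suc i) a @ v)"
     and "u @ b @ w = (u @ take i a) @ b ! i # (drop (Suc i) b @ w)"
    by (metis append.assoc append_Cons)+
  then show ?thesis using i(3) by (simp only: lexord_append_left_rightI)
qed

lemma concat_rev_split:
  assumes "j < length L"
  shows "concat (rev L) = concat (rev (drop (Suc j) L)) @ L ! j @ concat (rev (take j L))"
proof -
  have "L = take j L @ L ! j # drop (Suc j) L" using assms by (simp add: id_take_nth_drop)
  then have "rev L = rev (drop (Suc j) L) @ L ! j # rev (take j L)" by (metis rev.simps(2) rev_append append.assoc append_Cons append_Nil)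
  then show ?thesis by simp
qed

lemma CR_lexmin:
  assumes dn: "d \<le> n" and C': "max_chain d n C'" and neq: "C' \<noteq> CR d n"
  shows "chain_lex_less (CR d n) C'"
proof -
  interpret mc d n C' using dn C' by unfold_locales
  let ?r = "d * (n - d)"
  define J where "J = {j. j < Suc ?r \<and> C' ! j \<noteq> CR d n ! j}"
  have "J \<noteq> {}"
  proof
    assume "J = {}"
    then have "C' = CR d n" using len by (intro nth_equalityI) (auto simp: J_def)
    then show False using neq by simp
  qed
  have fJ: "finite J" by (simp add: J_def)
  define j where "j = Max J"
  have jJ: "j \<in> J" using Max_in[OF fJ \<open>J \<noteq> {}\<close>] j_def by simp
  have jr: "j \<noteq> ?r"
  proof
    assume "j = ?r"
    then have "C' ! j = topl d n" using last len by simp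
    moreover have "CR d n ! j = topl d n" using \<open>j = ?r\<close> by (simp add: CR_nth cr_top)
    ultimately show False using jJ by (simp add: J_def)
  qed
  then have jr': "j < ?r" using jJ by (simp add: J_def)
  have above: "\<And>j'. j < j' \<Longrightarrow> j' < Suc ?r \<Longrightarrow> C' ! j' = CR d n ! j'"
  proof -
    fix j' assume "j < j'" "j' < Suc ?r"
    then have "j' \<notin> J" using Max_ge[OF fJ] j_def by force
    then show "C' ! j' = CR d n ! j'" using \<open>j' < Suc ?r\<close> by (simp add: J_def)
  qed
  have dr: "drop (Suc j) C' = drop (Suc j) (CR d n)"
    using len above by (intro nth_equalityI) auto
  have y: "C' ! Suc j = cr d n (Suc j)" using above[of "Suc j"] jr' by (simp add: CR_nth)
  obtain h' where h': "h' < d" "C' ! Suc j = incr (C' ! j) h'" using step[of j] len jr' by auto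
  obtain p where p: "p < d" "cr d n (Suc j) = incr (cr d n j) p" "\<forall>i<p. cr d n (Suc j) ! i = Suc i"
    using cr_step_gen[OF jr'] by blast
  have Cj: "C' ! j \<in> Iset d n" using inI len jr' by simp
  have lC: "length (C' ! j) = d" using Cj by (simp add: Iset_iff)
  have CRj: "CR d n ! j = cr d n j" using jr' by (simp add: CR_nth)
  have "h' \<noteq> p"
  proof
    assume "h' = p"
    then have "C' ! j = cr d n j" using incr_inj[of "C' ! j" h' "cr d n j"] h' p y lC by simp
    then show False using jJ CRj by (simp add: J_def)
  qed
  moreover have "\<not> h' < p"
  proof
    assume "h' < p"
    then have "cr d n (Suc j) ! h' = Suc h'" using p by simp
    then have "Suc (C' ! j ! h') = Suc h'" using h' y lC by (simp add: incr_nth)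
    then show False using Iset_bounds(1)[OF Cj h'(1)] by simp
  qed
  ultimately have ph: "p < h'" by simp
  have lex: "(cr d n j, C' ! j) \<in> lexord {(a, b). a < b}"
    unfolding lexord_take_index_conv
  proof (intro disjI2 exI conjI)
    show "p < min (length (cr d n j)) (length (C' ! j))" using p lC by simp
    show "take p (cr d n j) = take p (C' ! j)"
    proof (intro nth_equalityI)
      fix i assume "i < length (take p (cr d n j))"
      then have ip: "i < p" using p by simp
      have "cr d n (Suc j) ! i = cr d n j ! i" using p ip by (simp add: incr_nth)
      moreover have "C' ! Suc j ! i = C' ! j ! i" using h' ip ph lC by (simp add: incr_nth)
      ultimately show "take p (cr d n j) ! i = take p (C' ! j) ! i" using y ip by simp
    qed (simp add: lC p)
    have "cr d n (Suc j) ! p = Suc (cr d n j ! p)" using p by (simp add: incr_nth)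
    moreover have "C' ! Suc j ! p = C' ! j ! p" using h' ph lC p by (simp add: incr_nth)
    ultimately show "(cr d n j ! p, C' ! j ! p) \<in> {(a, b). a < b}" using y by simp
  qed
  have "(concat (rev (drop (Suc j) (CR d n))) @ CR d n ! j @ concat (rev (take j (CR d n))),
         concat (rev (drop (Suc j) C')) @ C' ! j @ concat (rev (take j C'))) \<in> lexord {(a, b). a < b}"
    unfolding dr CRj using lex lC by (intro lex_app) simp_all
  then show ?thesis unfolding chain_lex_less_def lex_less_def
    using concat_rev_split[of j "CR d n"] concat_rev_split[of j C'] len jr' by simp
qed

lemma C_right_eq:
  assumes "d \<le> n" shows "C_right d n = CR d n"
  unfolding C_right_def
proof (rule the_equality)
  show "max_chain d n (CR d n) \<and> (\<forall>C'. max_chain d n C' \<longrightarrow> C' = CR d n \<or> chain_lex_less (CR d n) C')"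
    using CR_max_chain[OF assms] CR_lexmin[OF assms] by blast
next
  fix C assume C: "max_chain d n C \<and> (\<forall>C'. max_chain d n C' \<longrightarrow> C' = C \<or> chain_lex_less C C')"
  show "C = CR d n"
  proof (rule ccontr)
    assume ne: "C \<noteq> CR d n"
    then have a: "chain_lex_less C (CR d n)" using C CR_max_chain[OF assms] by blast
    have b: "chain_lex_less (CR d n) C" using CR_lexmin[OF assms] C ne by blast
    have "asym {(a, b). (a::nat) < b}" by (auto intro: asymI)
    then show False using a b lexord_asymmetric unfolding chain_lex_less_def lex_less_def by blast
  qed
qed



lemma square:
  assumes a: "a \<in> Iset d n" and m: "incr a p \<in> Iset d n" and b: "incr (incr a p) q \<in> Iset d n"
    and pq: "p < q" "q < d"
  shows "card (bru_interval d n a (incr (incr a p) q)) = 4 \<and> a \<in> bru_interval d n a (incr (incr a p) q)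
    \<and> incr a p \<in> bru_interval d n a (incr (incr a p) q)
    \<and> incr (incr a p) q \<in> bru_interval d n a (incr (incr a p) q)
    \<and> (\<exists>x. bru_interval d n a (incr (incr a p) q) - {a, incr a p, incr (incr a p) q} = {x}
         \<and> lex_less x (incr a p))"
proof -
  let ?m = "incr a p" and ?b = "incr (incr a p) q" and ?x = "incr a q"
  have la: "length a = d" using a by (simp add: Iset_iff)
  have pd: "p < d" using pq by simp
  have mn: "\<And>k. ?m ! k = (if k = p then Suc (a ! p) else a ! k)" using la pd by (simp add: incr_nth)
  have bn: "\<And>k. ?b ! k = (if k = q then Suc (a ! q) else if k = p then Suc (a ! p) else a ! k)"
    using la pq by (simp add: incr_nth)
  have xn: "\<And>k. ?x ! k = (if k = q then Suc (a ! q) else a ! k)" using la pq by (simp add: incr_nth)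
  have sa: "\<forall>i j. i < j \<longrightarrow> j < d \<longrightarrow> a ! i < a ! j" and ba: "\<forall>i<d. 1 \<le> a ! i \<and> a ! i \<le> n"
    using a by (auto simp: Iset_iff)
  have sb: "\<forall>i j. i < j \<longrightarrow> j < d \<longrightarrow> ?b ! i < ?b ! j" and bb: "\<forall>i<d. 1 \<le> ?b ! i \<and> ?b ! i \<le> n"
    using b by (auto simp: Iset_iff)
  have x: "?x \<in> Iset d n"
    unfolding Iset_iff
  proof (intro conjI allI impI)
    show "length ?x = d" using la by simp
  next
    fix i j assume ij: "i < j" "j < d"
    show "?x ! i < ?x ! j"
    proof (cases "j = q")
      case True then show ?thesis using ij sa by (simp add: xn less_SucI)
    next
      case False
      show ?thesis
      proof (cases "i = q")
        case True
        have "?b ! i < ?b ! j" using sb ij by blast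
        then show ?thesis using True False ij pq by (simp add: xn bn)
      next
        case False
        then show ?thesis using \<open>j \<noteq> q\<close> ij sa by (simp add: xn)
      qed
    qed
  next
    fix i assume i: "i < d"
    show "1 \<le> ?x ! i" using ba i by (simp add: xn)
    have "?b ! i \<le> n" using bb i by blast
    then show "?x ! i \<le> n" using i pq by (simp add: xn bn split: if_splits)
  qed
  have J: "\<And>z. z \<in> bru_interval d n a ?b \<longleftrightarrow> z = a \<or> z = ?m \<or> z = ?x \<or> z = ?b"
  proof
    fix z assume "z \<in> bru_interval d n a ?b"
    then have z1: "bru_le a z" and z2: "bru_le z ?b" by (auto simp: bru_interval_def)
    have lz: "length z = d" using z1 la by (simp add: bru_le_def)
    have o: "\<And>k. k < d \<Longrightarrow> k \<noteq> p \<Longrightarrow> k \<noteq> q \<Longrightarrow> z ! k = a ! k"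
      using z1 z2 la by (fastforce simp: bru_le_def bn)
    have "a ! p \<le> z ! p" "z ! p \<le> ?b ! p" "a ! q \<le> z ! q" "z ! q \<le> ?b ! q"
      using z1 z2 la pq unfolding bru_le_def by auto
    then have zp: "z ! p = a ! p \<or> z ! p = Suc (a ! p)"
      and zq: "z ! q = a ! q \<or> z ! q = Suc (a ! q)" using bn[of p] bn[of q] pq by auto
    have "\<And>w. length w = d \<Longrightarrow> w ! p = z ! p \<Longrightarrow> w ! q = z ! q \<Longrightarrow> (\<forall>k<d. k \<noteq> p \<longrightarrow> k \<noteq> q \<longrightarrow> w ! k = a ! k) \<Longrightarrow> z = w"
      using o lz by (metis nth_equalityI)
    then show "z = a \<or> z = ?m \<or> z = ?x \<or> z = ?b"
      using zp zq pq la by (auto simp: mn xn bn)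
  next
    fix z assume "z = a \<or> z = ?m \<or> z = ?x \<or> z = ?b"
    then show "z \<in> bru_interval d n a ?b"
      using a m x b la pq by (auto simp: bru_interval_def bru_le_def mn xn bn)
  qed
  have Jeq: "bru_interval d n a ?b = {a, ?m, ?x, ?b}" using J by blast
  have d1: "a \<noteq> ?m" using mn[of p] by auto
  have d2: "a \<noteq> ?x" using xn[of q] by auto
  have d3: "a \<noteq> ?b" using bn[of q] by auto
  have d4: "?m \<noteq> ?x" using mn[of p] xn[of p] pq by auto
  have d5: "?m \<noteq> ?b" using mn[of q] bn[of q] pq by auto
  have d6: "?x \<noteq> ?b" using xn[of p] bn[of p] pq by auto
  have c: "card (bru_interval d n a ?b) = 4" using Jeq d1 d2 d3 d4 d5 d6 by simp
  have diff: "bru_interval d n a ?b - {a, ?m, ?b} = {?x}" using Jeq d1 d2 d3 d4 d5 d6 by auto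
  have lex: "lex_less ?x ?m"
    unfolding lex_less_def lexord_take_index_conv
  proof (intro disjI2 exI conjI)
    show "p < min (length ?x) (length ?m)" using la pd by simp
    show "take p ?x = take p ?m"
      using pq by (intro nth_equalityI) (auto simp: xn mn la)
    show "(?x ! p, ?m ! p) \<in> {(a, b). a < b}" using pq by (simp add: xn mn)
  qed
  show ?thesis using c diff lex J by blast
qed



definition pos :: "nat \<Rightarrow> nat \<Rightarrow> nat \<Rightarrow> nat \<Rightarrow> nat" where
  "pos d n s h = (d - h) * (n - d) + (s - h) + 1"

lemma step_CR:
  assumes dn: "d \<le> n" and ad: "admissible d n s h"
  shows "pos d n s h \<in> {1..d * (n - d)} \<and> step_op d n (CR d n) (pos d n s h) = (s, h)"
proof -
  obtain m where m: "m = n - d" by simp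
  define c where "c = d - h"
  define q where "q = s - h"
  have c: "c < d" and q: "q < n - d" using ad by (auto simp: admissible_def c_def q_def)
  define k where "k = c * (n - d) + q"
  have "k < Suc c * (n - d)" using q by (simp add: k_def)
  also have "\<dots> \<le> d * (n - d)" using c by (intro mult_le_mono1) simp
  finally have kr: "k < d * (n - d)" .
  have pk: "pos d n s h = Suc k" by (simp add: pos_def k_def c_def q_def)
  have e1: "CR d n ! (Suc k - 1) = cr d n k" using kr by (simp add: CR_nth)
  have e2: "CR d n ! Suc k = incr (cr d n k) (d - Suc c)" using kr cr_step[OF c q] by (simp add: CR_nth k_def)
  have hh: "d - Suc c = h - 1" using ad by (simp add: c_def admissible_def)
  have ii: "incr (cr d n k) (d - Suc c) \<in> Iset d n" using cr_step[OF c q] cr_Iset[OF dn] by (metis k_def)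
  have "step_op d n (CR d n) (Suc k) = (CR d n ! (Suc k - 1) ! (d - Suc c), Suc (d - Suc c))"
    using e1 e2 c ii by (intro the_step) (simp_all add: cr_Iset dn)
  also have "\<dots> = (s, h)"
    using e1 cr_val[OF c q] hh ad by (simp add: k_def c_def q_def admissible_def)
  finally show ?thesis using pk kr by simp
qed

lemma pos_surj:
  assumes dn: "d \<le> n" and u: "u \<in> {1..d * (n - d)}"
  shows "\<exists>s h. admissible d n s h \<and> u = pos d n s h"
proof -
  let ?m = "n - d"
  have m: "?m > 0" using u by (cases "?m = 0") auto
  define c where "c = (u - 1) div ?m"
  define q where "q = (u - 1) mod ?m"
  have k: "u - 1 = c * ?m + q" unfolding c_def q_def by (metis div_mult_mod_eq)
  have q: "q < ?m" using m by (simp add: q_def)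
  have "u - 1 < d * ?m" using u by auto
  then have c: "c < d" unfolding c_def by (rule less_mult_imp_div_less)
  have "admissible d n (d - c + q) (d - c)" using c q dn unfolding admissible_def by linarith
  moreover have "u = pos d n (d - c + q) (d - c)" using k c u unfolding pos_def by (simp del: mult_Suc mult_Suc_right) linarith
  ultimately show ?thesis by blast
qed

lemma sigma_val:
  assumes dn: "d \<le> n" and t: "t \<in> {1..d * (n - d)}" and st: "step_op d n C t = (s, h)"
    and ad: "admissible d n s h"
  shows "sigma d n C t = pos d n s h"
  unfolding sigma_def C_right_eq[OF dn] using t
proof (simp only: if_True, intro the_equality)
  show "pos d n s h \<in> {1..d * (n - d)} \<and> step_op d n (CR d n) (pos d n s h) = step_op d n C t"
    using step_CR[OF dn ad] st by simp
next
  fix u assume "u \<in> {1..d * (n - d)} \<and> step_op d n (CR d n) u = step_op d n C t"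
  then have u: "u \<in> {1..d * (n - d)}" and su: "step_op d n (CR d n) u = (s, h)" using st by auto
  obtain s' h' where ad': "admissible d n s' h'" and up: "u = pos d n s' h'" using pos_surj[OF dn u] by blast
  have "step_op d n (CR d n) u = (s', h')" using step_CR[OF dn ad'] up by simp
  then show "u = pos d n s h" using su up by simp
qed

lemma pos_order:
  assumes "admissible d n s1 h1" "admissible d n s2 h2" "pos d n s2 h2 < pos d n s1 h1"
    and "h1 = h2 \<Longrightarrow> s2 = Suc s1"
  shows "h1 < h2"
proof -
  have "h1 \<noteq> h2"
  proof
    assume "h1 = h2"
    then show False using assms by (auto simp: pos_def admissible_def)
  qed
  moreover have "\<not> h2 < h1"
  proof
    assume "h2 < h1"
    obtain m where m: "m = n - d" by simp
    have s1: "s1 - h1 < m" using assms(1) m by (auto simp: admissible_def)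
    have "(d - h1) * m + (s1 - h1) < Suc (d - h1) * m" using s1 by simp
    also have "\<dots> \<le> (d - h2) * m" using \<open>h2 < h1\<close> assms(1) by (intro mult_le_mono1) (auto simp: admissible_def)
    finally have "pos d n s1 h1 < pos d n s2 h2" using m by (simp add: pos_def)
    then show False using assms(3) by simp
  qed
  ultimately show ?thesis by simp
qed



lemma tr_lt:
  assumes "(i::nat) < j" "\<not> (i = t \<and> j = Suc t)"
  shows "transpose t (Suc t) i < transpose t (Suc t) j"
  using assms unfolding transpose_def by (auto split: if_splits)

lemma tr_range:
  assumes "1 \<le> t" "Suc t \<le> r" "i \<in> {1..r}"
  shows "transpose t (Suc t) i \<in> {1..r}"
  using assms unfolding transpose_def by auto

lemma inversion:
  assumes "weak_less_R r (\<sigma> \<circ> transpose t (Suc t)) \<sigma>" "1 \<le> t" "Suc t \<le> r"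
  shows "\<sigma> (Suc t) < \<sigma> t"
proof (rule ccontr)
  assume "\<not> \<sigma> (Suc t) < \<sigma> t"
  then have le: "\<sigma> t \<le> \<sigma> (Suc t)" by simp
  let ?\<tau> = "transpose t (Suc t)"
  have pu: "(\<sigma> \<circ> ?\<tau>) permutes {1..r}" and pw: "\<sigma> permutes {1..r}"
    and eq: "inv_len r (\<sigma> \<circ> ?\<tau>) + inv_len r (inv (\<sigma> \<circ> ?\<tau>) \<circ> \<sigma>) = inv_len r \<sigma>"
    using assms unfolding weak_less_R_def weak_le_R_def by (blast, blast, blast)
  have bs: "bij \<sigma>" using pw by (rule permutes_bij)
  have "inv (\<sigma> \<circ> ?\<tau>) = inv ?\<tau> \<circ> inv \<sigma>" using bs by (intro o_inv_distrib) auto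
  then have "inv (\<sigma> \<circ> ?\<tau>) \<circ> \<sigma> = ?\<tau>" using bs by (simp add: o_assoc bij_is_inj)
  then have eq2: "inv_len r (\<sigma> \<circ> ?\<tau>) + inv_len r ?\<tau> = inv_len r \<sigma>" using eq by simp
  have fin: "\<And>f. finite {(i, j). i \<in> {1..r} \<and> j \<in> {1..r} \<and> i < j \<and> f j < f i}"
    by (rule finite_subset[of _ "{1..r} \<times> {1..r}"]) auto
  define T where "T = {(i, j). i \<in> {1..r} \<and> j \<in> {1..r} \<and> i < j \<and> ?\<tau> j < ?\<tau> i}"
  have "(t, Suc t) \<in> T"
    using assms by (simp add: T_def)
  then have "T \<noteq> {}" by blast
  moreover have "finite T" unfolding T_def by (rule fin)
  ultimately have "card T > 0" by (simp only: card_gt_0_iff) blast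
  then have one: "inv_len r ?\<tau> \<ge> 1" unfolding inv_len_def T_def[symmetric] by simp
  have "inv_len r \<sigma> \<le> inv_len r (\<sigma> \<circ> ?\<tau>)"
    unfolding inv_len_def
  proof (rule card_inj_on_le[where f = "\<lambda>(i, j). (?\<tau> i, ?\<tau> j)"])
    show "inj_on (\<lambda>(i, j). (?\<tau> i, ?\<tau> j)) {(i, j). i \<in> {1..r} \<and> j \<in> {1..r} \<and> i < j \<and> \<sigma> j < \<sigma> i}"
      by (auto simp: inj_on_def dest: transpose_eq_imp_eq)
    show "finite {(i, j). i \<in> {1..r} \<and> j \<in> {1..r} \<and> i < j \<and> (\<sigma> \<circ> ?\<tau>) j < (\<sigma> \<circ> ?\<tau>) i}"
      using fin .
    show "(\<lambda>(i, j). (?\<tau> i, ?\<tau> j)) ` {(i, j). i \<in> {1..r} \<and> j \<in> {1..r} \<and> i < j \<and> \<sigma> j < \<sigma> i}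
      \<subseteq> {(i, j). i \<in> {1..r} \<and> j \<in> {1..r} \<and> i < j \<and> (\<sigma> \<circ> ?\<tau>) j < (\<sigma> \<circ> ?\<tau>) i}"
    proof clarify
      fix i j assume ij: "i \<in> {1..r}" "j \<in> {1..r}" "i < j" "\<sigma> j < \<sigma> i"
      have "\<not> (i = t \<and> j = Suc t)" using ij le by auto
      then have "?\<tau> i < ?\<tau> j" using ij tr_lt by blast
      moreover have "?\<tau> i \<in> {1..r}" "?\<tau> j \<in> {1..r}" using ij assms tr_range by blast+
      ultimately show "?\<tau> i \<in> {1..r} \<and> ?\<tau> j \<in> {1..r} \<and> ?\<tau> i < ?\<tau> j \<and> (\<sigma> \<circ> ?\<tau>) (?\<tau> j) < (\<sigma> \<circ> ?\<tau>) (?\<tau> i)"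
        using ij by simp
    qed
  qed
  then show False using eq2 one by simp
qed



theorem proposition2p31:
  fixes d n t :: nat and C :: "nat list list"
  assumes "1 \<le> d" and "d < n"
    and "max_chain d n C"
    and "1 \<le> t" and "t \<le> d * (n - d) - 1"
    and "weak_less_R (d * (n - d)) (sigma d n C \<circ> transpose t (t + 1)) (sigma d n C)"
  shows "E_op d n C t \<noteq> None"
proof -
  have dn: "d \<le> n" using assms by simp
  interpret mc d n C using dn assms(3) by unfold_locales
  let ?r = "d * (n - d)"
  have r1: "1 \<le> ?r" using assms(1,2) by simp
  have tr: "Suc t \<le> ?r" using assms(5) r1 by linarith
  have lt: "Suc t < length C" using len tr by simp
  let ?a = "C ! (t - 1)" and ?m = "C ! t" and ?b = "C ! (t + 1)"
  have lt': "Suc (t - 1) < length C" using lt by simp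
  obtain p where p: "p < d" "C ! Suc (t - 1) = incr ?a p" using step[OF lt'] by blast
  have mp: "?m = incr ?a p" using p assms(4) by simp
  obtain q where q: "q < d" "C ! Suc t = incr ?m q" using step[OF lt] by blast
  have bq: "?b = incr ?m q" using q by simp
  have aI: "?a \<in> Iset d n" and mI: "?m \<in> Iset d n" and bI: "?b \<in> Iset d n" using inI lt by simp_all
  have st1: "step_op d n C t = (?a ! p, Suc p)"
    using the_step[of C t d n p] aI mI mp p dn by simp
  have st2: "step_op d n C (Suc t) = (?m ! q, Suc q)"
    using the_step[of C "Suc t" d n q] mI bI bq q dn by simp
  have ad1: "admissible d n (?a ! p) (Suc p)" using root_op_incr[OF aI _ p(1) dn] mp mI by simp
  have ad2: "admissible d n (?m ! q) (Suc q)" using root_op_incr[OF mI _ q(1) dn] bq bI by simp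
  have s1: "sigma d n C t = pos d n (?a ! p) (Suc p)"
    using sigma_val[OF dn _ st1 ad1] assms(4) tr by simp
  have s2: "sigma d n C (Suc t) = pos d n (?m ! q) (Suc q)"
    using sigma_val[OF dn _ st2 ad2] tr by simp
  have "sigma d n C (Suc t) < sigma d n C t"
    using inversion[of ?r "sigma d n C" t] assms(4,6) tr by simp
  then have "pos d n (?m ! q) (Suc q) < pos d n (?a ! p) (Suc p)" using s1 s2 by simp
  moreover have "Suc p = Suc q \<Longrightarrow> ?m ! q = Suc (?a ! p)"
    using mp p aI by (simp add: incr_nth Iset_iff)
  ultimately have "Suc p < Suc q" using pos_order[OF ad1 ad2] by blast
  then have pq: "p < q" by simp
  have sq: "card (bru_interval d n ?a (incr (incr ?a p) q)) = 4 \<and> ?a \<in> bru_interval d n ?a (incr (incr ?a p) q)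
    \<and> incr ?a p \<in> bru_interval d n ?a (incr (incr ?a p) q)
    \<and> incr (incr ?a p) q \<in> bru_interval d n ?a (incr (incr ?a p) q)
    \<and> (\<exists>x. bru_interval d n ?a (incr (incr ?a p) q) - {?a, incr ?a p, incr (incr ?a p) q} = {x}
         \<and> lex_less x (incr ?a p))"
    using square[OF aI _ _ pq q(1)] mp bq mI bI by simp
  show ?thesis
    unfolding E_op_def Let_def using sq mp bq by (simp del: One_nat_def)
qed


end
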